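(* Let $\mathcal{G}=(V,E)$ be a graph with $|V|=n$ and let $\mathcal{P}$ be a local destination-based failover protocol on $\mathcal{G}$. Then one can construct a local destination-based failover protocol $\mathcal{P}_K$ on the complete graph $K_n$ with node set $V$ such that, for all-to-one routing towards any destination $d\in V$ and any set $\mathcal{F}^{(K)}$ of failed edges of $K_n$, the distribution of the loads of the nodes under $\mathcal{P}_K$ in $K_n$ with failures $\mathcal{F}^{(K)}$ is the same as under $\mathcal{P}$ in $\mathcal{G}$ with failures $\mathcal{F}=E\cap\mathcal{F}^{(K)}$ (indeed, every packet follows the same path with the same probability in both settings).
   Context: Local destination-based failover routing: $\Gamma(v)$ denotes the neighbors of $v$ in the graph; given failed edges $\mathcal{F}$, $\mathcal{F}_v=\{w~|~(v,w)\in\mathcal{F}\}$. A local destination-based failover protocol is a family of distributions $\mathcal{D}(v,\mathcal{F}_v,d)$ over $(\Gamma(v)\setminus\mathcal{F}_v)\cup\{v\}$ for all $v,d\in V$ and $\mathcal{F}_v\subseteq\Gamma(v)$. Given the failure set, each node $v$ independently draws its routing entry $\alpha(v,\mathcal{F}_v,d)$ from $\mathcal{D}(v,\mathcal{F}_v,d)$ and forwards packets with destination $d$ there. All-to-one routing towards $d$: every node $v\neq d$ sends one flow to $d$ along the entries. The load of a node is the number of flows passing through it (including its own); nodes on a forwarding cycle traversed by a flow have infinite load. *)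

theory Defs
  imports "HOL-Probability.Probability" "HOL-Library.Extended_Nat"
begin

definition graph :: "'a set \<Rightarrow> ('a \<times> 'a) set \<Rightarrow> bool" where
  "graph V E \<longleftrightarrow> finite V \<and> E \<subseteq> V \<times> V \<and> sym E \<and> (\<forall>v. (v, v) \<notin> E)"

definition complete_edges :: "'a set \<Rightarrow> ('a \<times> 'a) set" where
  "complete_edges V = {(u, w). u \<in> V \<and> w \<in> V \<and> u \<noteq> w}"

definition nbrs :: "('a \<times> 'a) set \<Rightarrow> 'a \<Rightarrow> 'a set" where
  "nbrs E v = {w. (v, w) \<in> E}"

definition failed_at :: "('a \<times> 'a) set \<Rightarrow> 'a \<Rightarrow> 'a set" where
  "failed_at F v = {w. (v, w) \<in> F}"

definition failure_set :: "('a \<times> 'a) set \<Rightarrow> ('a \<times> 'a) set \<Rightarrow> bool" where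
  "failure_set E F \<longleftrightarrow> F \<subseteq> E \<and> sym F"

definition failover_protocol ::
  "'a set \<Rightarrow> ('a \<times> 'a) set \<Rightarrow> ('a \<Rightarrow> 'a set \<Rightarrow> 'a \<Rightarrow> 'a pmf) \<Rightarrow> bool" where
  "failover_protocol V E D \<longleftrightarrow>
     (\<forall>v\<in>V. \<forall>d\<in>V. \<forall>Fv. Fv \<subseteq> nbrs E v \<longrightarrow>
        set_pmf (D v Fv d) \<subseteq> (nbrs E v - Fv) \<union> {v})"

definition entries_pmf ::
  "'a set \<Rightarrow> ('a \<Rightarrow> 'a set \<Rightarrow> 'a \<Rightarrow> 'a pmf) \<Rightarrow> ('a \<times> 'a) set \<Rightarrow> 'a \<Rightarrow> ('a \<Rightarrow> 'a) pmf" where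
  "entries_pmf V D F d = Pi_pmf V undefined (\<lambda>v. D v (failed_at F v) d)"

definition visits :: "('a \<Rightarrow> 'a) \<Rightarrow> 'a \<Rightarrow> 'a \<Rightarrow> 'a \<Rightarrow> bool" where
  "visits \<alpha> d v u \<longleftrightarrow> (\<exists>k. (\<alpha> ^^ k) v = u \<and> (\<forall>j<k. (\<alpha> ^^ j) v \<noteq> d))"

definition on_cycle :: "('a \<Rightarrow> 'a) \<Rightarrow> 'a \<Rightarrow> 'a \<Rightarrow> bool" where
  "on_cycle \<alpha> d u \<longleftrightarrow> (\<exists>m>0. (\<alpha> ^^ m) u = u \<and> (\<forall>j<m. (\<alpha> ^^ j) u \<noteq> d))"

definition load :: "'a set \<Rightarrow> ('a \<Rightarrow> 'a) \<Rightarrow> 'a \<Rightarrow> 'a \<Rightarrow> enat" where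
  "load V \<alpha> d u =
     (if \<exists>v\<in>V - {d}. visits \<alpha> d v u \<and> on_cycle \<alpha> d u then \<infinity>
      else enat (card {v\<in>V - {d}. visits \<alpha> d v u}))"

text \<open>The path of the packet from v: iterate the entries, stopping at d.\<close>
definition packet_path :: "('a \<Rightarrow> 'a) \<Rightarrow> 'a \<Rightarrow> 'a \<Rightarrow> nat \<Rightarrow> 'a" where
  "packet_path \<alpha> d v k = ((\<alpha>(d := d)) ^^ k) v"

end

theory Submission
  imports Defs
begin

theorem mainTheorem6:
  fixes V :: "'a set" and E :: "('a \<times> 'a) set" and D :: "'a \<Rightarrow> 'a set \<Rightarrow> 'a \<Rightarrow> 'a pmf"
  assumes "graph V E"
    and "failover_protocol V E D"
  shows "\<exists>DK. failover_protocol V (complete_edges V) DK \<and>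
    (\<forall>d\<in>V. \<forall>FK. failure_set (complete_edges V) FK \<longrightarrow>
       map_pmf (\<lambda>\<alpha>. \<lambda>u\<in>V. load V \<alpha> d u) (entries_pmf V DK FK d)
         = map_pmf (\<lambda>\<alpha>. \<lambda>u\<in>V. load V \<alpha> d u) (entries_pmf V D (E \<inter> FK) d)
     \<and> map_pmf (\<lambda>\<alpha>. \<lambda>v\<in>V. packet_path \<alpha> d v) (entries_pmf V DK FK d)
         = map_pmf (\<lambda>\<alpha>. \<lambda>v\<in>V. packet_path \<alpha> d v) (entries_pmf V D (E \<inter> FK) d))"
proof -
  define DK where "DK = (\<lambda>v Fv d. D v (Fv \<inter> nbrs E v) d)"
  have eq: "entries_pmf V DK FK d = entries_pmf V D (E \<inter> FK) d" for FK d
  proof -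
    have "(\<lambda>v. DK v (failed_at FK v) d) = (\<lambda>v. D v (failed_at (E \<inter> FK) v) d)"
      unfolding DK_def failed_at_def nbrs_def by (rule ext) (simp add: Collect_conj_eq Int_commute)
    then show ?thesis unfolding entries_pmf_def by simp
  qed
  have sub: "nbrs E v \<subseteq> nbrs (complete_edges V) v" for v
    using assms(1) unfolding graph_def nbrs_def complete_edges_def by auto
  have "failover_protocol V (complete_edges V) DK"
    unfolding failover_protocol_def
  proof (intro ballI allI impI)
    fix v d Fv assume v: "v \<in> V" and d: "d \<in> V" and "Fv \<subseteq> nbrs (complete_edges V) v"
    have "set_pmf (D v (Fv \<inter> nbrs E v) d) \<subseteq> (nbrs E v - (Fv \<inter> nbrs E v)) \<union> {v}"
      using assms(2) v d unfolding failover_protocol_def by blast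
    then show "set_pmf (DK v Fv d) \<subseteq> (nbrs (complete_edges V) v - Fv) \<union> {v}"
      unfolding DK_def using sub[of v] by blast
  qed
  then show ?thesis using eq by auto
qed

end
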